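(* Let $\mathsf r:\phi\to\psi$ be a non-trivial linear inference among a nonempty set of variables $\mathcal{V}\neq\emptyset$ (the variables occurring in $\mathsf r$). Then there is a constant-free, negation-free, non-trivial linear inference $\mathsf r':\phi'\to\psi'$ with $\phi',\psi'$ linear formulae on $\mathcal{V}$, such that $\mathsf r$ is $\{\mathsf{s},\mathsf{m},\mathsf r'\}$-derivable with units.
   Context: Fix a countably infinite set of variables. Linear formulae on a finite set $\mathcal{V}$ of variables are defined inductively: - $\top,\bot$ are linear formulae on $\emptyset$. - $x$ and $\neg x$ are linear formulae on $\{x\}$. - If $\phi$ is on $\mathcal{V}_1$, $\psi$ is on $\mathcal{V}_2$ and $\mathcal{V}_1\cap\mathcal{V}_2=\emptyset$, then $\phi\lor\psi$ and $\phi\land\psi$ are on $\mathcal{V}_1\cup\mathcal{V}_2$. A formula is constant-free if it contains no $\top,\bot$, and negation-free if it contains no $\neg x$. Formulae are evaluated under Boolean assignments. A linear inference $\phi\to\psi$ is a pair of linear formulae such that every assignment satisfying $\phi$ satisfies $\psi$. An inference $\phi\to\psi$ is trivial at a variable $x$ if $\phi[\top/x]\to\psi[\bot/x]$ is valid; it is trivial if trivial at some variable, non-trivial otherwise. A congruence is an equivalence relation closed under $\land$- and $\lor$-contexts. - $\sim_{\mathsf{ac}}$ is the smallest congruence containing commutativity and associativity of $\land,\lor$. - $\sim_{\mathsf{u}}$ is the smallest congruence containing $\phi\land\top\sim\phi$, $\top\land\phi\sim\phi$, $\phi\lor\bot\sim\phi$, $\bot\lor\phi\sim\phi$, $\phi\land\bot\sim\bot$,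 $\bot\land\phi\sim\bot$, $\phi\lor\top\sim\top$, $\top\lor\phi\sim\top$. - $\sim_{\mathsf{acu}}$ is the smallest congruence containing both. For a set $S$ of linear inferences, $\to_S$ is the smallest relation containing $S$ and closed under substitution (of linear formulae for variables, keeping linearity) and contexts. $\phi\rightsquigarrow_{S\mathsf u}\psi$ means $\phi\sim_{\mathsf{acu}}\phi'\to_S\psi'\sim_{\mathsf{acu}}\psi$ for some $\phi',\psi'$. The inference $\phi\to\psi$ is $S$-derivable with units if $\phi,\psi$ are related by the reflexive-transitive closure of $\rightsquigarrow_{S\mathsf u}\cup\sim_{\mathsf{acu}}$. Switch $\mathsf{s}$ is $x\land(y\lor z)\to(x\land y)\lor z$; medial $\mathsf{m}$ is $(w\land x)\lor(y\land z)\to(w\lor y)\land(x\lor z)$. *)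

theory Defs
  imports Main
begin

datatype fm = Top | Bot | Var nat | NVar nat | And fm fm | Or fm fm

fun vars :: "fm \<Rightarrow> nat set" where
  "vars Top = {}" | "vars Bot = {}" | "vars (Var x) = {x}" | "vars (NVar x) = {x}"
| "vars (And a b) = vars a \<union> vars b" | "vars (Or a b) = vars a \<union> vars b"

fun linear :: "fm \<Rightarrow> bool" where
  "linear (And a b) = (linear a \<and> linear b \<and> vars a \<inter> vars b = {})"
| "linear (Or a b) = (linear a \<and> linear b \<and> vars a \<inter> vars b = {})"
| "linear _ = True"

definition linear_on :: "nat set \<Rightarrow> fm \<Rightarrow> bool" where
  "linear_on V phi \<longleftrightarrow> linear phi \<and> vars phi = V"

fun const_free :: "fm \<Rightarrow> bool" where
  "const_free Top = False" | "const_free Bot = False"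
| "const_free (And a b) = (const_free a \<and> const_free b)"
| "const_free (Or a b) = (const_free a \<and> const_free b)"
| "const_free _ = True"

fun neg_free :: "fm \<Rightarrow> bool" where
  "neg_free (NVar _) = False"
| "neg_free (And a b) = (neg_free a \<and> neg_free b)"
| "neg_free (Or a b) = (neg_free a \<and> neg_free b)"
| "neg_free _ = True"

fun eval :: "(nat \<Rightarrow> bool) \<Rightarrow> fm \<Rightarrow> bool" where
  "eval v Top = True" | "eval v Bot = False" | "eval v (Var x) = v x"
| "eval v (NVar x) = (\<not> v x)"
| "eval v (And a b) = (eval v a \<and> eval v b)"
| "eval v (Or a b) = (eval v a \<or> eval v b)"

fun dual :: "fm \<Rightarrow> fm" where
  "dual Top = Bot" | "dual Bot = Top" | "dual (Var x) = NVar x" | "dual (NVar x) = Var x"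
| "dual (And a b) = Or (dual a) (dual b)" | "dual (Or a b) = And (dual a) (dual b)"

fun sub :: "(nat \<Rightarrow> fm) \<Rightarrow> fm \<Rightarrow> fm" where
  "sub s Top = Top" | "sub s Bot = Bot" | "sub s (Var x) = s x"
| "sub s (NVar x) = dual (s x)"
| "sub s (And a b) = And (sub s a) (sub s b)"
| "sub s (Or a b) = Or (sub s a) (sub s b)"

definition subc :: "nat \<Rightarrow> fm \<Rightarrow> fm \<Rightarrow> fm" where
  "subc x c phi = sub (\<lambda>y. if y = x then c else Var y) phi"

definition valid_imp :: "fm \<Rightarrow> fm \<Rightarrow> bool" where
  "valid_imp phi psi \<longleftrightarrow> (\<forall>v. eval v phi \<longrightarrow> eval v psi)"

definition lin_inf :: "fm \<Rightarrow> fm \<Rightarrow> bool" where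
  "lin_inf phi psi \<longleftrightarrow> linear phi \<and> linear psi \<and> valid_imp phi psi"

definition trivial_at :: "fm \<Rightarrow> fm \<Rightarrow> nat \<Rightarrow> bool" where
  "trivial_at phi psi x \<longleftrightarrow> valid_imp (subc x Top phi) (subc x Bot psi)"

definition trivial :: "fm \<Rightarrow> fm \<Rightarrow> bool" where
  "trivial phi psi \<longleftrightarrow> (\<exists>x \<in> vars phi \<union> vars psi. trivial_at phi psi x)"

inductive acu :: "fm \<Rightarrow> fm \<Rightarrow> bool" where
  refl: "acu a a"
| sym: "acu a b \<Longrightarrow> acu b a"
| trans: "acu a b \<Longrightarrow> acu b c \<Longrightarrow> acu a c"
| ctx_and_l: "acu a b \<Longrightarrow> acu (And a c) (And b c)"
| ctx_and_r: "acu a b \<Longrightarrow> acu (And c a) (And c b)"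
| ctx_or_l: "acu a b \<Longrightarrow> acu (Or a c) (Or b c)"
| ctx_or_r: "acu a b \<Longrightarrow> acu (Or c a) (Or c b)"
| comm_and: "acu (And a b) (And b a)"
| comm_or: "acu (Or a b) (Or b a)"
| assoc_and: "acu (And (And a b) c) (And a (And b c))"
| assoc_or: "acu (Or (Or a b) c) (Or a (Or b c))"
| and_top_r: "acu (And a Top) a"
| and_top_l: "acu (And Top a) a"
| or_bot_r: "acu (Or a Bot) a"
| or_bot_l: "acu (Or Bot a) a"
| and_bot_r: "acu (And a Bot) Bot"
| and_bot_l: "acu (And Bot a) Bot"
| or_top_r: "acu (Or a Top) Top"
| or_top_l: "acu (Or Top a) Top"

inductive rewr :: "(fm \<times> fm) set \<Rightarrow> fm \<Rightarrow> fm \<Rightarrow> bool" for S where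
  base: "(a, b) \<in> S \<Longrightarrow> rewr S a b"
| subst: "rewr S a b \<Longrightarrow> linear (sub s a) \<Longrightarrow> linear (sub s b) \<Longrightarrow> rewr S (sub s a) (sub s b)"
| ctx_and_l: "rewr S a b \<Longrightarrow> linear (And a c) \<Longrightarrow> linear (And b c) \<Longrightarrow> rewr S (And a c) (And b c)"
| ctx_and_r: "rewr S a b \<Longrightarrow> linear (And c a) \<Longrightarrow> linear (And c b) \<Longrightarrow> rewr S (And c a) (And c b)"
| ctx_or_l: "rewr S a b \<Longrightarrow> linear (Or a c) \<Longrightarrow> linear (Or b c) \<Longrightarrow> rewr S (Or a c) (Or b c)"
| ctx_or_r: "rewr S a b \<Longrightarrow> linear (Or c a) \<Longrightarrow> linear (Or c b) \<Longrightarrow> rewr S (Or c a) (Or c b)"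

definition rewr_u :: "(fm \<times> fm) set \<Rightarrow> fm \<Rightarrow> fm \<Rightarrow> bool" where
  "rewr_u S a b \<longleftrightarrow> (\<exists>a' b'. acu a a' \<and> rewr S a' b' \<and> acu b' b)"

definition step_u :: "(fm \<times> fm) set \<Rightarrow> fm \<Rightarrow> fm \<Rightarrow> bool" where
  "step_u S a b \<longleftrightarrow> linear a \<and> linear b \<and> (rewr_u S a b \<or> acu a b)"

definition derivable_u :: "(fm \<times> fm) set \<Rightarrow> fm \<Rightarrow> fm \<Rightarrow> bool" where
  "derivable_u S a b \<longleftrightarrow> (step_u S)\<^sup>*\<^sup>* a b"

definition switch :: "fm \<times> fm" where
  "switch = (And (Var 0) (Or (Var 1) (Var 2)), Or (And (Var 0) (Var 1)) (Var 2))"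

definition medial :: "fm \<times> fm" where
  "medial = (Or (And (Var 0) (Var 1)) (And (Var 2) (Var 3)),
             And (Or (Var 0) (Var 2)) (Or (Var 1) (Var 3)))"

end

theory Submission
  imports Defs
begin

fun pvars :: "fm \<Rightarrow> nat set" where
  "pvars (Var x) = {x}"
| "pvars (And a b) = pvars a \<union> pvars b" | "pvars (Or a b) = pvars a \<union> pvars b"
| "pvars _ = {}"

fun nvars :: "fm \<Rightarrow> nat set" where
  "nvars (NVar x) = {x}"
| "nvars (And a b) = nvars a \<union> nvars b" | "nvars (Or a b) = nvars a \<union> nvars b"
| "nvars _ = {}"

lemma vars_pn: "vars f = pvars f \<union> nvars f"
  by (induction f) auto

lemma pn_disj: "linear f \<Longrightarrow> pvars f \<inter> nvars f = {}"
  by (induction f) (auto simp: vars_pn)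

lemma mono_eval:
  "(\<forall>y\<in>pvars f. u y \<longrightarrow> w y) \<Longrightarrow> (\<forall>y\<in>nvars f. w y \<longrightarrow> u y) \<Longrightarrow> eval u f \<Longrightarrow> eval w f"
  by (induction f) auto

lemma eval_dual: "eval v (dual g) = (\<not> eval v g)"
  by (induction g) auto

lemma eval_sub: "eval v (sub s f) = eval (\<lambda>y. eval v (s y)) f"
  by (induction f) (auto simp: eval_dual)

lemma eval_subc: "eval v (subc x c f) = eval (v(x := eval v c)) f"
  unfolding subc_def eval_sub
  by (rule arg_cong[where f="\<lambda>u. eval u f"]) auto

lemma trivial_at_iff:
  "trivial_at phi psi x \<longleftrightarrow> (\<forall>v. eval (v(x:=True)) phi \<longrightarrow> eval (v(x:=False)) psi)"
  unfolding trivial_at_def valid_imp_def eval_subc by simp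

definition nAnd :: "fm \<Rightarrow> fm \<Rightarrow> fm" where
  "nAnd a b = (if a = Bot \<or> b = Bot then Bot else if a = Top then b else if b = Top then a else And a b)"
definition nOr :: "fm \<Rightarrow> fm \<Rightarrow> fm" where
  "nOr a b = (if a = Top \<or> b = Top then Top else if a = Bot then b else if b = Bot then a else Or a b)"

fun norm :: "fm \<Rightarrow> fm" where
  "norm (And a b) = nAnd (norm a) (norm b)"
| "norm (Or a b) = nOr (norm a) (norm b)"
| "norm f = f"

lemma acu_norm: "acu f (norm f)"
proof (induction f)
  case (And a b)
  have 1: "acu (And a b) (And (norm a) (norm b))"
    by (meson And acu.ctx_and_l acu.ctx_and_r acu.trans)
  have 2: "acu (And (norm a) (norm b)) (nAnd (norm a) (norm b))"
    unfolding nAnd_def by (auto intro: acu.intros)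
  show ?case using 1 2 acu.trans by simp
next
  case (Or a b)
  have 1: "acu (Or a b) (Or (norm a) (norm b))"
    by (meson Or acu.ctx_or_l acu.ctx_or_r acu.trans)
  have 2: "acu (Or (norm a) (norm b)) (nOr (norm a) (norm b))"
    unfolding nOr_def by (auto intro: acu.intros)
  show ?case using 1 2 acu.trans by simp
qed (auto intro: acu.intros)

lemma eval_norm: "eval v (norm f) = eval v f"
  by (induction f) (auto simp: nAnd_def nOr_def)

lemma vars_norm: "vars (norm f) \<subseteq> vars f"
  by (induction f) (auto simp: nAnd_def nOr_def)

lemma linear_norm: "linear f \<Longrightarrow> linear (norm f)"
proof (induction f)
  case (And a b) then show ?case using vars_norm[of a] vars_norm[of b]
    by (auto simp: nAnd_def)
next
  case (Or a b) then show ?case using vars_norm[of a] vars_norm[of b]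
    by (auto simp: nOr_def)
qed auto

lemma cf_norm: "norm f = Top \<or> norm f = Bot \<or> const_free (norm f)"
  by (induction f) (auto simp: nAnd_def nOr_def)

fun pos :: "fm \<Rightarrow> fm" where
  "pos (NVar x) = Var x"
| "pos (And a b) = And (pos a) (pos b)" | "pos (Or a b) = Or (pos a) (pos b)"
| "pos f = f"

lemma vars_pos: "vars (pos f) = vars f" by (induction f) auto
lemma pvars_pos: "pvars (pos f) = vars f" by (induction f) auto
lemma nvars_pos: "nvars (pos f) = {}" by (induction f) auto
lemma linear_pos: "linear f \<Longrightarrow> linear (pos f)" by (induction f) (auto simp: vars_pos)
lemma cf_pos: "const_free f \<Longrightarrow> const_free (pos f)" by (induction f) auto
lemma nf_pos: "neg_free (pos f)" by (induction f) auto
lemma sub_pos: "(\<forall>x\<in>pvars f. s x = Var x) \<Longrightarrow> (\<forall>x\<in>nvars f. s x = NVar x) \<Longrightarrow> sub s (pos f) = f"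
  by (induction f) auto

theorem proposition2p16:
  fixes phi psi :: fm
  assumes "lin_inf phi psi"
    and "\<not> trivial phi psi"
    and "vars phi \<union> vars psi \<noteq> {}"
  shows "\<exists>phi' psi'.
           linear_on (vars phi \<union> vars psi) phi' \<and> linear_on (vars phi \<union> vars psi) psi' \<and>
           const_free phi' \<and> const_free psi' \<and> neg_free phi' \<and> neg_free psi' \<and>
           lin_inf phi' psi' \<and> \<not> trivial phi' psi' \<and>
           derivable_u {switch, medial, (phi', psi')} phi psi"
proof -
  define V where "V = vars phi \<union> vars psi"
  define a where "a = norm phi"
  define b where "b = norm psi"
  have linp: "linear phi" "linear psi" and val: "\<And>v. eval v phi \<Longrightarrow> eval v psi"
    using assms(1) unfolding lin_inf_def valid_imp_def by auto
  have la: "linear a" "linear b" using linp linear_norm a_def b_def by auto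
  have ea: "\<And>v. eval v a = eval v phi" "\<And>v. eval v b = eval v psi"
    using eval_norm a_def b_def by auto
  have valab: "\<And>v. eval v a \<Longrightarrow> eval v b" using ea val by auto
  have nt: "\<And>x. x \<in> V \<Longrightarrow> \<not> (\<forall>v. eval (v(x:=True)) a \<longrightarrow> eval (v(x:=False)) b)"
    using assms(2) unfolding trivial_def trivial_at_iff V_def ea by blast
  have pol: "x \<in> pvars a \<longleftrightarrow> x \<in> pvars b" if xV: "x \<in> V" for x
  proof
    assume xa: "x \<in> pvars a"
    show "x \<in> pvars b"
    proof (rule ccontr)
      assume xb: "x \<notin> pvars b"
      have "eval (v(x:=True)) a \<longrightarrow> eval (v(x:=False)) b" for v
      proof
        assume "eval (v(x:=True)) a"
        then have "eval (v(x:=True)) b" using valab by blast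
        then show "eval (v(x:=False)) b"
          by (rule mono_eval[rotated 2]) (use xb in auto)
      qed
      then show False using nt[OF xV] by blast
    qed
  next
    assume xb: "x \<in> pvars b"
    show "x \<in> pvars a"
    proof (rule ccontr)
      assume xa: "x \<notin> pvars a"
      have "eval (v(x:=True)) a \<longrightarrow> eval (v(x:=False)) b" for v
      proof
        assume "eval (v(x:=True)) a"
        then have "eval (v(x:=False)) a"
          by (rule mono_eval[rotated 2]) (use xa in auto)
        then show "eval (v(x:=False)) b" using valab by blast
      qed
      then show False using nt[OF xV] by blast
    qed
  qed
  have inv: "x \<in> vars a" if xV: "x \<in> V" for x
  proof (rule ccontr)
    assume xa: "x \<notin> vars a"
    have "eval (v(x:=True)) a \<longrightarrow> eval (v(x:=False)) b" for v
    proof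
      assume "eval (v(x:=True)) a"
      then have "eval (v(x:=False)) a"
        by (rule mono_eval[rotated 2]) (use xa in \<open>auto simp: vars_pn\<close>)
      then show "eval (v(x:=False)) b" using valab by blast
    qed
    then show False using nt[OF xV] by blast
  qed
  have inv2: "x \<in> vars b" if xV: "x \<in> V" for x
  proof (rule ccontr)
    assume xb: "x \<notin> vars b"
    have "eval (v(x:=True)) a \<longrightarrow> eval (v(x:=False)) b" for v
    proof
      assume "eval (v(x:=True)) a"
      then have "eval (v(x:=True)) b" using valab by blast
      then show "eval (v(x:=False)) b"
        by (rule mono_eval[rotated 2]) (use xb in \<open>auto simp: vars_pn\<close>)
    qed
    then show False using nt[OF xV] by blast
  qed
  have va: "vars a = V" using inv vars_norm[of phi] a_def V_def by blast
  have vb: "vars b = V" using inv2 vars_norm[of psi] b_def V_def by blast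
  have cfa: "const_free a"
    using cf_norm[of phi] va assms(3) a_def V_def by auto
  have cfb: "const_free b"
    using cf_norm[of psi] vb assms(3) b_def V_def by auto
  define N where "N = nvars a"
  define s where "s = (\<lambda>x. if x \<in> N then NVar x else Var x)"
  have da: "pvars a \<inter> nvars a = {}" "pvars b \<inter> nvars b = {}" using pn_disj la by auto
  have sa: "sub s (pos a) = a"
    by (rule sub_pos) (use da in \<open>auto simp: s_def N_def\<close>)
  have sb: "sub s (pos b) = b"
  proof (rule sub_pos)
    show "\<forall>x\<in>pvars b. s x = Var x"
      using pol da vb vars_pn[of b] by (auto simp: s_def N_def)
    show "\<forall>x\<in>nvars b. s x = NVar x"
      using pol da va vb vars_pn[of a] vars_pn[of b] by (auto simp: s_def N_def)
  qed
  define g where "g = (\<lambda>v y. if y \<in> N then \<not> v y else (v y :: bool))"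
  have gs: "(\<lambda>y. eval v (s y)) = g v" for v by (auto simp: s_def g_def)
  have ep: "eval v a = eval (g v) (pos a)" "eval v b = eval (g v) (pos b)" for v
    using eval_sub[of v s "pos a"] eval_sub[of v s "pos b"] sa sb gs by auto
  have gg: "g (g u) = u" for u by (auto simp: g_def)
  have valp: "valid_imp (pos a) (pos b)"
    unfolding valid_imp_def using ep valab gg by metis
  have ntp: "\<not> trivial (pos a) (pos b)"
  proof
    assume "trivial (pos a) (pos b)"
    then obtain x where xV: "x \<in> V" and tr: "\<forall>u. eval (u(x:=True)) (pos a) \<longrightarrow> eval (u(x:=False)) (pos b)"
      unfolding trivial_def trivial_at_iff vars_pos va vb by blast
    have "eval (v(x:=True)) a \<longrightarrow> eval (v(x:=False)) b" for v
    proof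
      assume h: "eval (v(x:=True)) a"
      show "eval (v(x:=False)) b"
      proof (cases "x \<in> N")
        case False
        then have "g (v(x:=c)) = (g v)(x:=c)" for c by (auto simp: g_def fun_eq_iff)
        then show ?thesis using h tr ep by metis
      next
        case True
        then have gx: "g (v(x:=c)) = (g v)(x:= \<not> c)" for c by (auto simp: g_def fun_eq_iff)
        have "eval ((g v)(x:=False)) (pos a)" using h ep gx by metis
        then have "eval ((g v)(x:=True)) (pos a)"
          by (rule mono_eval[rotated 2]) (auto simp: nvars_pos)
        then have "eval ((g v)(x:=False)) (pos b)" using tr by blast
        then have "eval ((g v)(x:=True)) (pos b)"
          by (rule mono_eval[rotated 2]) (auto simp: nvars_pos)
        then show ?thesis using ep gx by (metis (full_types))
      qed
    qed
    then show False using nt[OF xV] by blast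
  qed
  define S where "S = {switch, medial, (pos a, pos b)}"
  have "rewr S (pos a) (pos b)" by (rule rewr.base) (simp add: S_def)
  then have "rewr S (sub s (pos a)) (sub s (pos b))"
    by (rule rewr.subst) (use sa sb la in auto)
  then have "rewr S a b" using sa sb by simp
  then have "rewr_u S phi psi"
    unfolding rewr_u_def using acu_norm[of phi] acu_norm[of psi] acu.sym a_def b_def by blast
  then have der: "derivable_u S phi psi"
    unfolding derivable_u_def step_u_def using linp by auto
  show ?thesis
    apply (rule exI[of _ "pos a"], rule exI[of _ "pos b"])
    using der valp ntp la va vb cfa cfb
    by (auto simp: S_def V_def[symmetric] linear_on_def vars_pos linear_pos cf_pos nf_pos lin_inf_def)
qed

end
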